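(* Let $\mathcal{M}_\|$ be a two-dimensional timelike plane through the origin in $\mathbb{R}^{1+s}$ and $\mathcal{M}_\perp$ its Minkowski-orthogonal complement. Let $a_\pm\in\mathbb{R}^{1+s}$ satisfy $(a_+-a_-)_\|\in V_+$, where $y_\|$ denotes the component of $y$ in $\mathcal{M}_\|$ under the decomposition $\mathbb{R}^{1+s}=\mathcal{M}_\|\oplus\mathcal{M}_\perp$. Then the set $G:=\big((a_++\overline{V}_+)\cup(a_-+\overline{V}_-)\big)+\mathcal{M}_\perp$ has property $\mathbf{lts}(\mathcal{M}_\|)$.
   Context: $\mathbb{R}^{1+s}$ is Minkowski space with metric $xy=x_0y_0-\vec x\cdot\vec y$; $V_\pm$ open forward/backward light cones, $\overline{V}_\pm$ their closures. For a two-dimensional timelike plane $\mathcal{M}_\|$ through the origin, a set $G\subset\mathbb{R}^{1+s}$ has property $\mathbf{lts}(\mathcal{M}_\|)$ if every $p\in G$ has an open neighbourhood $\mathcal{N}_p$ invariant under translations by $\mathcal{M}_\|$ such that $G\cap\mathcal{N}_p\subset(a_+(p)+V_+)\cup(a_-(p)+V_-)$ for some $a_\pm(p)\in\mathbb{R}^{1+s}$ with $a_+(p)-a_-(p)\in V_+$. *)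

theory Defs
  imports "HOL-Analysis.Analysis"
begin

text \<open>Minkowski space R^{1+s} is modelled as real \<times> (real^'s), s = CARD('s);
  the first component is the time coordinate x_0, the second is the spatial vector.\<close>

type_synonym 's mink = "real \<times> (real ^ 's)"

definition mprod :: "'s::finite mink \<Rightarrow> 's mink \<Rightarrow> real" where
  "mprod x y = fst x * fst y - snd x \<bullet> snd y"

definition Vplus :: "'s::finite mink set" where
  "Vplus = {x. fst x > norm (snd x)}"

definition Vminus :: "'s::finite mink set" where
  "Vminus = {x. - fst x > norm (snd x)}"

definition transl :: "'s::finite mink \<Rightarrow> 's mink set \<Rightarrow> 's mink set" where
  "transl a A = (\<lambda>x. a + x) ` A"

definition setsum_mink :: "'s::finite mink set \<Rightarrow> 's mink set \<Rightarrow> 's mink set" where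
  "setsum_mink A B = {x + y | x y. x \<in> A \<and> y \<in> B}"

definition timelike_plane :: "'s::finite mink set \<Rightarrow> bool" where
  "timelike_plane M \<longleftrightarrow> subspace M \<and> dim M = 2 \<and> (\<exists>x\<in>M. mprod x x > 0)"

definition mperp :: "'s::finite mink set \<Rightarrow> 's mink set" where
  "mperp M = {y. \<forall>x\<in>M. mprod x y = 0}"

definition mpar :: "'s::finite mink set \<Rightarrow> 's mink \<Rightarrow> 's mink" where
  "mpar M y = (THE m. m \<in> M \<and> y - m \<in> mperp M)"

definition lts :: "'s::finite mink set \<Rightarrow> 's mink set \<Rightarrow> bool" where
  "lts M G \<longleftrightarrow> (\<forall>p\<in>G. \<exists>N. open N \<and> p \<in> N \<and> (\<forall>m\<in>M. transl m N = N) \<and>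
      (\<exists>ap am. ap - am \<in> Vplus \<and> G \<inter> N \<subseteq> transl ap Vplus \<union> transl am Vminus))"

end

theory Submission
  imports Defs
begin

lemma mprod_sym: "mprod x y = mprod y x"
  by (simp add: mprod_def inner_commute mult.commute)
lemma mprod_add_left: "mprod (x + y) z = mprod x z + mprod y z"
  by (simp add: mprod_def inner_add_left algebra_simps)
lemma mprod_add_right: "mprod z (x + y) = mprod z x + mprod z y"
  by (simp add: mprod_def inner_add_right algebra_simps)
lemma mprod_diff_left: "mprod (x - y) z = mprod x z - mprod y z"
  by (simp add: mprod_def inner_diff_left algebra_simps)
lemma mprod_diff_right: "mprod z (x - y) = mprod z x - mprod z y"
  by (simp add: mprod_def inner_diff_right algebra_simps)
lemma mprod_scale_left: "mprod (c *\<^sub>R x) y = c * mprod x y"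
  by (simp add: mprod_def algebra_simps)
lemma mprod_scale_right: "mprod y (c *\<^sub>R x) = c * mprod y x"
  by (simp add: mprod_def algebra_simps)
lemma mprod_minus_left: "mprod (- x) y = - mprod x y"
  by (simp add: mprod_def)
lemma mprod_minus_right: "mprod y (- x) = - mprod y x"
  by (simp add: mprod_def)
lemma mprod_zero_left[simp]: "mprod 0 y = 0"
  by (simp add: mprod_def)
lemma mprod_zero_right[simp]: "mprod y 0 = 0"
  by (simp add: mprod_def)

lemmas mprod_simps = mprod_add_left mprod_add_right mprod_diff_left mprod_diff_right
  mprod_scale_left mprod_scale_right mprod_minus_left mprod_minus_right

lemma orth_timelike:
  fixes t w :: "'s::finite mink"
  assumes "mprod t t > 0" "mprod t w = 0"
  shows "mprod w w \<le> 0 \<and> (w \<noteq> 0 \<longrightarrow> mprod w w < 0)"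
proof -
  define a where "a = fst t"
  define b where "b = snd t"
  define c where "c = fst w"
  define u where "u = snd w"
  have ab: "a^2 > (norm b)^2" using assms(1)
    by (simp add: mprod_def a_def b_def power2_eq_square flip: power2_norm_eq_inner)
  have a0: "a^2 > 0" using ab by (smt (verit) zero_le_power2)
  have ac: "a * c = b \<bullet> u" using assms(2) by (simp add: mprod_def a_def b_def c_def u_def)
  have cs: "\<bar>b \<bullet> u\<bar> \<le> norm b * norm u" by (rule Cauchy_Schwarz_ineq2)
  have h1: "(a*c)^2 \<le> (norm b)^2 * (norm u)^2"
    using cs ac by (metis abs_ge_zero power2_abs power_mono power_mult_distrib)
  have h2: "(norm b)^2 * (norm u)^2 \<le> a^2 * (norm u)^2"
    using ab by (simp add: mult_right_mono)
  have le: "c^2 \<le> (norm u)^2"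
    using h1 h2 a0 by (smt (verit, best) mult_le_cancel_left_pos power_mult_distrib)
  have ww: "mprod w w = c^2 - (norm u)^2"
    by (simp add: mprod_def c_def u_def power2_eq_square flip: power2_norm_eq_inner)
  have strict: "mprod w w < 0" if "w \<noteq> 0"
  proof (cases "u = 0")
    case True
    then have "a * c = 0" using ac by simp
    then have "c = 0" using a0 by auto
    then have "w = 0" using True c_def u_def by (simp add: prod_eq_iff)
    then show ?thesis using that by simp
  next
    case False
    then have "(norm u)^2 > 0" by simp
    then have "(norm b)^2 * (norm u)^2 < a^2 * (norm u)^2" using ab by simp
    then have "a^2 * c^2 < a^2 * (norm u)^2" using h1 by (simp add: power_mult_distrib)
    then have "c^2 < (norm u)^2" using a0 by simp
    then show ?thesis using ww by simp
  qed
  show ?thesis using le ww strict by simp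
qed

lemma future:
  fixes e z :: "'s::finite mink"
  assumes "e \<in> Vplus" "mprod z z > 0" "mprod e z > 0"
  shows "z \<in> Vplus"
proof -
  have e: "fst e > norm (snd e)" using assms(1) by (simp add: Vplus_def)
  have "(fst z)^2 > (norm (snd z))^2" using assms(2)
    by (simp add: mprod_def power2_eq_square flip: power2_norm_eq_inner)
  then have zz: "\<bar>fst z\<bar> > norm (snd z)"
    by (metis abs_norm_cancel power2_abs power_less_imp_less_base abs_ge_zero)
  show ?thesis
  proof (cases "fst z > 0")
    case True then show ?thesis using zz by (simp add: Vplus_def)
  next
    case False
    then have fz: "\<bar>fst z\<bar> = - fst z" by simp
    have "snd e \<bullet> snd z \<ge> - (norm (snd e) * norm (snd z))"
      using Cauchy_Schwarz_ineq2[of "snd e" "snd z"] by linarith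
    moreover have "norm (snd e) * norm (snd z) \<le> norm (snd e) * \<bar>fst z\<bar>"
      using zz by (simp add: mult_left_mono)
    moreover have "norm (snd e) * \<bar>fst z\<bar> < fst e * \<bar>fst z\<bar>"
      using e zz by (intro mult_strict_right_mono) (auto intro: le_less_trans[OF norm_ge_zero])
    ultimately have "mprod e z < 0" using fz by (simp add: mprod_def)
    then show ?thesis using assms(3) by simp
  qed
qed

lemma causal_nonneg:
  fixes e v :: "'s::finite mink"
  assumes "e \<in> Vplus" "norm (snd v) \<le> fst v"
  shows "mprod e v \<ge> 0" "mprod v v \<ge> 0"
proof -
  have e: "fst e > norm (snd e)" using assms(1) by (simp add: Vplus_def)
  have "snd e \<bullet> snd v \<le> norm (snd e) * norm (snd v)"
    using Cauchy_Schwarz_ineq2[of "snd e" "snd v"] by linarith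
  also have "\<dots> \<le> fst e * fst v" using e assms(2)
    by (intro mult_mono) (auto intro: less_imp_le le_less_trans[OF norm_ge_zero])
  finally show "mprod e v \<ge> 0" by (simp add: mprod_def)
  have "snd v \<bullet> snd v = norm (snd v) * norm (snd v)" by (simp flip: power2_eq_square power2_norm_eq_inner)
  also have "\<dots> \<le> fst v * fst v" using assms(2) by (intro mult_mono) (auto intro: order.trans[OF norm_ge_zero])
  finally show "mprod v v \<ge> 0" by (simp add: mprod_def)
qed

lemma closure_Vplus: "closure Vplus \<subseteq> {x. norm (snd x) \<le> fst x}"
  by (rule closure_minimal) (auto simp: Vplus_def intro!: closed_Collect_le continuous_intros)

lemma closure_Vminus: "closure Vminus \<subseteq> {x. norm (snd x) \<le> - fst x}"
  by (rule closure_minimal) (auto simp: Vminus_def intro!: closed_Collect_le continuous_intros)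


lemma continuous_on_mprod:
  assumes "continuous_on S f" "continuous_on S g"
  shows "continuous_on S (\<lambda>x. mprod (f x) (g x))"
  unfolding mprod_def using assms by (intro continuous_intros)

lemma plane_basis:
  fixes M :: "'s::finite mink set"
  assumes "timelike_plane M"
  obtains t s where "t \<in> M" "s \<in> M" "mprod t t > 0" "mprod s s < 0" "mprod t s = 0"
    "M \<subseteq> span {t, s}"
proof -
  have subM: "subspace M" and dM: "dim M = 2" using assms by (auto simp: timelike_plane_def)
  obtain t where t: "t \<in> M" "mprod t t > 0" using assms by (auto simp: timelike_plane_def)
  have t0: "t \<noteq> 0" using t by auto
  have "\<not> M \<subseteq> span {t}"
  proof
    assume "M \<subseteq> span {t}"
    then have "dim M \<le> dim (span {t})" by (rule dim_subset)
    then show False using dM t0 by simp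
  qed
  then obtain m where m: "m \<in> M" "m \<notin> span {t}" by auto
  define s where "s = m - (mprod m t / mprod t t) *\<^sub>R t"
  have sM: "s \<in> M" unfolding s_def using subM m t by (simp add: subspace_diff subspace_scale)
  have ts: "mprod t s = 0" using t unfolding s_def
    by (simp add: mprod_simps mprod_sym[of t m])
  have sspan: "s \<notin> span {t}"
  proof
    assume "s \<in> span {t}"
    then have "s + (mprod m t / mprod t t) *\<^sub>R t \<in> span {t}"
      by (simp add: span_add span_base span_scale)
    then show False using m unfolding s_def by simp
  qed
  then have s0: "s \<noteq> 0" by (auto simp: span_zero)
  have ss: "mprod s s < 0" using orth_timelike[OF t(2) ts] s0 by simp
  have ind: "independent {s, t}"
    using sspan t0 by (intro independent_insertI) (auto simp: independent_empty)
  have st: "s \<noteq> t" using ts t by auto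
  have "M \<subseteq> span {s, t}"
    by (rule card_ge_dim_independent) (use sM t ind dM st in auto)
  then have "M \<subseteq> span {t, s}" by (simp add: insert_commute)
  then show ?thesis using that t sM ss ts by blast
qed

lemma mperp_orth_subspace: "subspace {x. mprod x z = 0}"
  by (auto simp: subspace_def mprod_simps)

lemma mpar_formula:
  fixes M :: "'s::finite mink set"
  assumes subM: "subspace M" and tM: "t \<in> M" and sM: "s \<in> M"
    and tt: "mprod t t > 0" and ss: "mprod s s < 0" and ts: "mprod t s = 0"
    and Msp: "M \<subseteq> span {t, s}"
  shows "mpar M y = (mprod y t / mprod t t) *\<^sub>R t + (mprod y s / mprod s s) *\<^sub>R s \<and>
    y - mpar M y \<in> mperp M"
    (is "_ = ?f \<and> _")
proof -
  have fM: "?f \<in> M" using subM tM sM by (simp add: subspace_add subspace_scale)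
  have orth_t: "mprod t (y - ?f) = 0" using tt ts
    by (simp add: mprod_simps mprod_sym[of t y])
  have orth_s: "mprod s (y - ?f) = 0" using ss ts
    by (simp add: mprod_simps mprod_sym[of s y] mprod_sym[of s t])
  have fperp: "y - ?f \<in> mperp M"
  proof -
    have "span {t, s} \<subseteq> {x. mprod x (y - ?f) = 0}"
      using orth_t orth_s by (intro span_minimal) (auto simp: mperp_orth_subspace)
    then show ?thesis using Msp unfolding mperp_def by auto
  qed
  have eq: "mpar M y = ?f" unfolding mpar_def
  proof (rule the_equality)
    show "?f \<in> M \<and> y - ?f \<in> mperp M" using fM fperp by simp
  next
    fix m assume m: "m \<in> M \<and> y - m \<in> mperp M"
    define k where "k = m - ?f"
    have kM: "k \<in> M" unfolding k_def using m fM subM by (simp add: subspace_diff)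
    have korth: "mprod x k = 0" if "x \<in> M" for x
    proof -
      have "k = (y - ?f) - (y - m)" unfolding k_def by simp
      then show ?thesis using that m fperp unfolding mperp_def by (simp add: mprod_simps)
    qed
    have "mprod t k = 0" "mprod k k = 0" using korth tM kM by auto
    then have "k = 0" using orth_timelike[OF tt, of k] by auto
    then show "m = ?f" unfolding k_def by simp
  qed
  show ?thesis using eq fperp by simp
qed


theorem lemmaD7:
  fixes M :: "'s::finite mink set" and ap am :: "'s mink"
  assumes "timelike_plane M"
    and "mpar M (ap - am) \<in> Vplus"
  shows "lts M (setsum_mink (transl ap (closure Vplus) \<union> transl am (closure Vminus)) (mperp M))"
proof -
  have subM: "subspace M" using assms(1) by (simp add: timelike_plane_def)
  obtain t s where tM: "t \<in> M" and sM: "s \<in> M" and tt: "mprod t t > 0" and ss: "mprod s s < 0"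
    and ts: "mprod t s = 0" and Msp: "M \<subseteq> span {t, s}"
    using plane_basis[OF assms(1)] by blast
  define P where "P = mpar M"
  note mf = mpar_formula[OF subM tM sM tt ss ts Msp]
  have Pf: "P y = (mprod y t / mprod t t) *\<^sub>R t + (mprod y s / mprod s s) *\<^sub>R s" for y
    unfolding P_def using mf by blast
  define Q where "Q y = y - P y" for y
  have PM: "P y \<in> M" for y unfolding Pf using subM tM sM by (simp add: subspace_add subspace_scale)
  have Qperp: "Q y \<in> mperp M" for y unfolding Q_def P_def using mf by blast
  have Padd: "P (x + y) = P x + P y" for x y
    unfolding Pf by (simp add: mprod_simps add_divide_distrib scaleR_add_left)
  have Pminus: "P (- x) = - P x" for x
    unfolding Pf by (simp add: mprod_simps)
  have Pdiff: "P (x - y) = P x - P y" for x y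
    using Padd[of x "- y"] Pminus[of y] by simp
  have perp0: "mprod m w = 0" if "m \<in> M" "w \<in> mperp M" for m w
    using that by (simp add: mperp_def)
  have Pperp: "P w = 0" if "w \<in> mperp M" for w
  proof -
    have "mprod w t = 0" "mprod w s = 0" using perp0[OF tM that] perp0[OF sM that] mprod_sym by metis+
    then show ?thesis unfolding Pf by simp
  qed
  have PinM: "P m = m" if "m \<in> M" for m
  proof -
    have "Q m \<in> M" unfolding Q_def using that PM subM by (simp add: subspace_diff)
    then have "mprod (Q m) (Q m) = 0" using perp0 Qperp by blast
    moreover have "mprod t (Q m) = 0" using perp0[OF tM Qperp] .
    ultimately have "Q m = 0" using orth_timelike[OF tt, of "Q m"] by auto
    then show ?thesis unfolding Q_def by simp
  qed
  have Qadd: "Q (x + y) = Q x + Q y" for x y unfolding Q_def using Padd by simp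
  have Qdiff: "Q (x - y) = Q x - Q y" for x y unfolding Q_def using Pdiff by simp
  have QM: "Q (m + x) = Q x" if "m \<in> M" for m x
    unfolding Q_def using Padd PinM[OF that] by simp
  have Qw: "Q w = w" if "w \<in> mperp M" for w unfolding Q_def using Pperp[OF that] by simp
  have perp_diff: "a - b \<in> mperp M" if "a \<in> mperp M" "b \<in> mperp M" for a b
    using that by (simp add: mperp_def mprod_simps)
  define d where "d = P (ap - am)"
  have dV: "d \<in> Vplus" using assms(2) by (simp add: d_def P_def)
  have dM: "d \<in> M" unfolding d_def by (rule PM)
  have dd: "mprod d d > 0"
  proof -
    have h: "fst d > norm (snd d)" using dV by (simp add: Vplus_def)
    have "snd d \<bullet> snd d = norm (snd d) * norm (snd d)"
      by (simp flip: power2_eq_square power2_norm_eq_inner)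
    also have "\<dots> < fst d * fst d" using h by (intro mult_strict_mono) (auto intro: le_less_trans[OF norm_ge_zero])
    finally show ?thesis by (simp add: mprod_def)
  qed
  define \<delta> where "\<delta> = mprod d d / 16"
  have \<delta>0: "\<delta> > 0" using dd by (simp add: \<delta>_def)
  have claim: "P v + (1/4) *\<^sub>R d + B \<in> Vplus"
    if v: "norm (snd v) \<le> fst v" and B: "B \<in> mperp M" and BB: "- mprod B B < \<delta>" for v B
  proof -
    define A where "A = P v + (1/4) *\<^sub>R d"
    have AM: "A \<in> M" unfolding A_def using PM dM subM by (simp add: subspace_add subspace_scale)
    have AB: "mprod A B = 0" using perp0[OF AM B] .
    have sq: "mprod (A + B) (A + B) = mprod A A + mprod B B"
      using AB by (simp add: mprod_simps mprod_sym[of B A])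
    have vd: "mprod (P v) d = mprod v d"
    proof -
      have "v = P v + Q v" by (simp add: Q_def)
      then have "mprod v d = mprod (P v) d + mprod (Q v) d" by (metis mprod_add_left)
      moreover have "mprod (Q v) d = 0" using perp0[OF dM Qperp] mprod_sym by metis
      ultimately show ?thesis by simp
    qed
    have vd0: "mprod v d \<ge> 0" using causal_nonneg(1)[OF dV v] mprod_sym by metis
    have vv: "mprod (P v) (P v) \<ge> 0"
    proof -
      have "v = P v + Q v" by (simp add: Q_def)
      have e1: "mprod (P v + Q v) (P v + Q v) = mprod (P v) (P v) + mprod (Q v) (Q v) + 2 * mprod (P v) (Q v)"
        by (simp add: mprod_simps mprod_sym[of "Q v" "P v"])
      have "mprod v v = mprod (P v) (P v) + mprod (Q v) (Q v) + 2 * mprod (P v) (Q v)"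
      proof -
        have vv': "P v + Q v = v" by (simp add: Q_def)
        show ?thesis using e1 unfolding vv' .
      qed
      moreover have "mprod (P v) (Q v) = 0" using perp0[OF PM Qperp] .
      moreover have "mprod (Q v) (Q v) \<le> 0" using orth_timelike[OF tt perp0[OF tM Qperp]] by simp
      moreover have "mprod v v \<ge> 0" using causal_nonneg(2)[OF dV v] .
      ultimately show ?thesis by linarith
    qed
    have AA: "mprod A A = mprod (P v) (P v) + (1/2) * mprod (P v) d + (1/16) * mprod d d"
      unfolding A_def by (simp add: mprod_simps mprod_sym[of d "P v"]) (simp add: field_simps)
    have "mprod A A \<ge> \<delta>" using AA vv vd vd0 by (simp add: \<delta>_def)
    then have pos: "mprod (A + B) (A + B) > 0" using sq BB by linarith
    have dB: "mprod d B = 0" using perp0[OF dM B] .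
    have "mprod d (A + B) = mprod (P v) d + (1/4) * mprod d d"
      unfolding A_def using dB by (simp add: mprod_simps mprod_sym[of d "P v"])
    then have "mprod d (A + B) > 0" using vd vd0 dd by simp
    then show ?thesis using future[OF dV pos] by (simp add: A_def)
  qed
  show ?thesis unfolding lts_def
  proof
    fix p
    assume pG: "p \<in> setsum_mink (transl ap (closure Vplus) \<union> transl am (closure Vminus)) (mperp M)"
    define N where "N = {x. - mprod (Q x - Q p) (Q x - Q p) < \<delta>}"
    have "continuous_on UNIV (\<lambda>x. - mprod (Q x - Q p) (Q x - Q p))"
      unfolding Q_def Pf using tt ss by (intro continuous_intros continuous_on_mprod) auto
    then have oN: "open N" unfolding N_def by (intro open_Collect_less) (auto intro: continuous_on_const)
    have pN: "p \<in> N" using \<delta>0 by (simp add: N_def)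
    have inv: "transl m N = N" if m: "m \<in> M" for m
    proof
      show "transl m N \<subseteq> N" unfolding transl_def N_def using QM[OF m] by auto
      show "N \<subseteq> transl m N"
      proof
        fix x assume x: "x \<in> N"
        have mm: "- m \<in> M" using m subM by (simp add: subspace_neg)
        have "x - m \<in> N" using x QM[OF mm, of x] unfolding N_def by simp
        then show "x \<in> transl m N" unfolding transl_def by (rule image_eqI[rotated]) simp
      qed
    qed
    define bp where "bp = P ap + Q p - (1/4) *\<^sub>R d"
    define bm where "bm = P am + Q p + (1/4) *\<^sub>R d"
    have bpm: "bp - bm = (1/2) *\<^sub>R d"
    proof -
      have "bp - bm = (P ap - P am) - (1/2) *\<^sub>R d" by (simp add: bp_def bm_def algebra_simps flip: scaleR_add_left)
      also have "P ap - P am = d" by (simp add: d_def Pdiff)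
      also have "d - (1/2) *\<^sub>R d = (1 - 1/2) *\<^sub>R d" by (simp only: scaleR_diff_left scaleR_one)
      finally show ?thesis by simp
    qed
    have bpmV: "bp - bm \<in> Vplus" using dV unfolding bpm by (simp add: Vplus_def)
    have sub: "setsum_mink (transl ap (closure Vplus) \<union> transl am (closure Vminus)) (mperp M) \<inter> N
        \<subseteq> transl bp Vplus \<union> transl bm Vminus"
    proof
      fix x assume xx: "x \<in> setsum_mink (transl ap (closure Vplus) \<union> transl am (closure Vminus)) (mperp M) \<inter> N"
      then have xN: "- mprod (Q x - Q p) (Q x - Q p) < \<delta>" by (simp add: N_def)
      from xx obtain y w where x: "x = y + w" and yy: "y \<in> transl ap (closure Vplus) \<union> transl am (closure Vminus)"
        and w: "w \<in> mperp M" by (auto simp: setsum_mink_def)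
      from yy show "x \<in> transl bp Vplus \<union> transl bm Vminus"
      proof
        assume "y \<in> transl ap (closure Vplus)"
        then obtain v where y: "y = ap + v" and v: "v \<in> closure Vplus" by (auto simp: transl_def)
        have vc: "norm (snd v) \<le> fst v" using v closure_Vplus by auto
        have Qx: "Q x = Q ap + Q v + w" using x y Qadd Qw[OF w] by simp
        have eq: "x - bp = P v + (1/4) *\<^sub>R d + (Q x - Q p)"
          unfolding bp_def Q_def x y by (simp add: Padd Pperp[OF w] algebra_simps)
        have "x - bp \<in> Vplus" unfolding eq
          by (rule claim[OF vc perp_diff[OF Qperp Qperp] xN])
        then have "x \<in> transl bp Vplus" unfolding transl_def by (rule image_eqI[rotated]) simp
        then show ?thesis by simp
      next
        assume "y \<in> transl am (closure Vminus)"
        then obtain v where y: "y = am + v" and v: "v \<in> closure Vminus" by (auto simp: transl_def)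
        have vc: "norm (snd (- v)) \<le> fst (- v)" using v closure_Vminus by auto
        have Qx: "Q x = Q am + Q v + w" using x y Qadd Qw[OF w] by simp
        have eq: "bm - x = P (- v) + (1/4) *\<^sub>R d + (Q p - Q x)"
          unfolding bm_def Q_def x y by (simp add: Padd Pminus Pperp[OF w] algebra_simps)
        have BB: "- mprod (Q p - Q x) (Q p - Q x) < \<delta>"
          using xN by (simp add: mprod_simps algebra_simps)
        have "bm - x \<in> Vplus" unfolding eq
          by (rule claim[OF vc perp_diff[OF Qperp Qperp] BB])
        then have "x - bm \<in> Vminus" by (simp add: Vplus_def Vminus_def norm_minus_commute)
        then have "x \<in> transl bm Vminus" unfolding transl_def by (rule image_eqI[rotated]) simp
        then show ?thesis by simp
      qed
    qed
    show "\<exists>N. open N \<and> p \<in> N \<and> (\<forall>m\<in>M. transl m N = N) \<and>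
      (\<exists>a1 a2. a1 - a2 \<in> Vplus \<and> setsum_mink (transl ap (closure Vplus) \<union> transl am (closure Vminus)) (mperp M) \<inter> N
         \<subseteq> transl a1 Vplus \<union> transl a2 Vminus)"
    proof -
      have E: "\<exists>a1 a2. a1 - a2 \<in> Vplus \<and> setsum_mink (transl ap (closure Vplus) \<union> transl am (closure Vminus)) (mperp M) \<inter> N
         \<subseteq> transl a1 Vplus \<union> transl a2 Vminus"
        by (rule exI[of _ bp], rule exI[of _ bm], rule conjI[OF bpmV sub])
      show ?thesis by (rule exI[of _ N], intro conjI oN pN ballI E, erule inv)
    qed
  qed
qed

end
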